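(* Let $\delta\in(0,1)$ and $\lambda_0\in(0,\pi)$. Let $\{U_t,t\in\mathbb{Z}\}$ be a zero-mean weakly stationary process with spectral density $f_U$ which is continuous on $[0,\pi]$ and satisfies $\inf_{\lambda\in[0,\pi]}f_U(\lambda)>0$. Let $\{X_{t,\delta},t\in\mathbb{Z}\}$ be a zero-mean weakly stationary process with spectral density $$f_\delta(\lambda)=\frac{f_U(\lambda)}{|1-(1-\delta)e^{-i(\lambda-\lambda_0)}|^{2}\,|1-(1-\delta)e^{-i(\lambda+\lambda_0)}|^{2}},\qquad \lambda\in\mathbb{R}.$$ Let $(a_{1,\delta},a_{2,\delta})$ be the unique minimizer of $(c_1,c_2)\mapsto \mathrm{E}(X_{t,\delta}-c_1X_{t-1,\delta}-c_2X_{t-2,\delta})^2$, and when $a_{2,\delta}<0$ define $\lambda_{0,\delta}=\arccos\big(a_{1,\delta}(1-a_{2,\delta})/(-4a_{2,\delta})\big)$. Then (i) $\lim_{\delta\to0}(a_{1,\delta},a_{2,\delta})=(2\cos(\lambda_0),-1)$; (ii) $\lim_{\delta\to0}\lambda_{0,\delta}=\lambda_0$. *)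

theory Defs
  imports "HOL-Probability.Probability"
begin

definition has_spectral_density :: "'a measure \<Rightarrow> (int \<Rightarrow> 'a \<Rightarrow> real) \<Rightarrow> (real \<Rightarrow> real) \<Rightarrow> bool" where
  "has_spectral_density M X f \<longleftrightarrow>
     prob_space M \<and>
     (\<forall>l\<in>{-pi..pi}. 0 \<le> f l) \<and>
     set_integrable lborel {-pi..pi} f \<and>
     (\<forall>t. X t \<in> borel_measurable M \<and> integrable M (\<lambda>\<omega>. (X t \<omega>)\<^sup>2) \<and> integral\<^sup>L M (X t) = 0) \<and>
     (\<forall>t s. complex_of_real (integral\<^sup>L M (\<lambda>\<omega>. X t \<omega> * X s \<omega>)) =
            (LINT l:{-pi..pi}|lborel. exp (\<i> * of_int (t - s) * of_real l) * of_real (f l)))"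

end

theory Submission
  imports Defs
begin

lemma cmod_sq_formula:
  fixes r x :: real
  shows "(cmod (1 - complex_of_real r * exp (- \<i> * complex_of_real x)))\<^sup>2 = 1 - 2*r*cos x + r\<^sup>2"
proof -
  have "(cmod (1 - complex_of_real r * exp (- \<i> * complex_of_real x)))\<^sup>2 = (1 - r * cos x)\<^sup>2 + (r * sin x)\<^sup>2"
    by (simp add: cmod_power2 Re_exp Im_exp)
  also have "\<dots> = 1 - 2*r*cos x + r\<^sup>2" using sin_cos_squared_add[of x] by algebra
  finally show ?thesis .
qed

lemma prod_identity:
  fixes r c s c0 s0 :: real
  assumes "s\<^sup>2 + c\<^sup>2 = 1" "s0\<^sup>2 + c0\<^sup>2 = 1"
  shows "(1 - 2*r*(c*c0 + s * s0) + r\<^sup>2) * (1 - 2*r*(c*c0 - s * s0) + r\<^sup>2)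
     = (1-r)^4 + 4*r*(1-r)\<^sup>2*(1 - c*c0) + 4*r\<^sup>2*(c-c0)\<^sup>2"
  using assms by algebra

definition Pd :: "real \<Rightarrow> real \<Rightarrow> real \<Rightarrow> real" where
  "Pd lam0 d l = (1 - 2*(1-d)*cos(l-lam0) + (1-d)\<^sup>2) * (1 - 2*(1-d)*cos(l+lam0) + (1-d)\<^sup>2)"

lemma Pd_identity:
  "Pd lam0 d l = d^4 + 4*(1-d)*d\<^sup>2*(1 - cos l * cos lam0) + 4*(1-d)\<^sup>2*(cos l - cos lam0)\<^sup>2"
proof -
  have "Pd lam0 d l = (1 - 2*(1-d)*(cos l*cos lam0 + sin l * sin lam0) + (1-d)\<^sup>2) * (1 - 2*(1-d)*(cos l*cos lam0 - sin l * sin lam0) + (1-d)\<^sup>2)"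
    unfolding Pd_def by (simp add: cos_diff cos_add)
  also have "\<dots> = (1-(1-d))^4 + 4*(1-d)*(1-(1-d))\<^sup>2*(1 - cos l*cos lam0) + 4*(1-d)\<^sup>2*(cos l-cos lam0)\<^sup>2"
    by (rule prod_identity) simp_all
  finally show ?thesis by simp
qed

lemma Pd_lower:
  assumes "0 < d" "d \<le> 1/2"
  shows "(cos l - cos lam0)\<^sup>2 \<le> Pd lam0 d l" "d^4 \<le> Pd lam0 d l" "0 < Pd lam0 d l"
proof -
  have cc: "0 \<le> 1 - cos l * cos lam0"
  proof -
    have "\<bar>cos l * cos lam0\<bar> \<le> 1 * 1" unfolding abs_mult by (intro mult_mono) auto
    thus ?thesis by linarith
  qed
  have t2: "0 \<le> 4*(1-d)*d\<^sup>2*(1 - cos l * cos lam0)" using assms cc by simp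
  have "1 \<le> 4*(1-d)\<^sup>2"
  proof -
    have "1/2 \<le> 1 - d" using assms by simp
    hence "(1/2)\<^sup>2 \<le> (1-d)\<^sup>2" by (intro power_mono) auto
    hence "1/4 \<le> (1-d)\<^sup>2" by (simp add: power2_eq_square)
    thus ?thesis by linarith
  qed
  hence t3: "(cos l - cos lam0)\<^sup>2 \<le> 4*(1-d)\<^sup>2*(cos l - cos lam0)\<^sup>2"
    using mult_right_mono[of 1 "4*(1-d)\<^sup>2" "(cos l - cos lam0)\<^sup>2"] by simp
  have t3': "0 \<le> 4*(1-d)\<^sup>2*(cos l - cos lam0)\<^sup>2" by simp
  have t1: "0 < d^4" using assms by simp
  show "(cos l - cos lam0)\<^sup>2 \<le> Pd lam0 d l" unfolding Pd_identity using t1 t2 t3 by linarith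
  show "d^4 \<le> Pd lam0 d l" unfolding Pd_identity using t2 t3' by linarith
  show "0 < Pd lam0 d l" unfolding Pd_identity using t1 t2 t3' by linarith
qed

lemma cos_diff_le: "\<bar>cos (x::real) - cos y\<bar> \<le> \<bar>x - y\<bar>"
proof -
  have "\<bar>cos x - cos y\<bar> = 2 * \<bar>sin ((x + y) / 2)\<bar> * \<bar>sin ((y - x) / 2)\<bar>"
    by (simp add: cos_diff_cos abs_mult)
  also have "\<dots> \<le> 2 * 1 * \<bar>(y - x) / 2\<bar>"
    by (intro mult_mono abs_sin_x_le_abs_x) auto
  finally show ?thesis by simp
qed

lemma Pd_upper:
  assumes "0 < d" "d < 1" "\<bar>l - lam0\<bar> \<le> d"
  shows "Pd lam0 d l \<le> 13 * d\<^sup>2"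
proof -
  have "d^4 \<le> d\<^sup>2" using assms by (simp add: power_decreasing)
  have cc: "1 - cos l * cos lam0 \<le> 2"
  proof -
    have "\<bar>cos l * cos lam0\<bar> \<le> 1 * 1" unfolding abs_mult by (intro mult_mono) auto
    thus ?thesis by linarith
  qed
  have cc0: "0 \<le> 1 - cos l * cos lam0"
  proof -
    have "\<bar>cos l * cos lam0\<bar> \<le> 1 * 1" unfolding abs_mult by (intro mult_mono) auto
    thus ?thesis by linarith
  qed
  have "4*(1-d)*d\<^sup>2*(1 - cos l * cos lam0) \<le> 4*1*d\<^sup>2*2"
    using assms cc cc0 by (intro mult_mono) auto
  moreover have "(cos l - cos lam0)\<^sup>2 \<le> d\<^sup>2"
    using cos_diff_le[of l lam0] assms(3) by (metis abs_ge_zero order_trans power2_abs power_mono)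
  hence "4*(1-d)\<^sup>2*(cos l - cos lam0)\<^sup>2 \<le> 4*1*d\<^sup>2"
    using assms by (intro mult_mono) (auto simp: power_le_one)
  ultimately show ?thesis unfolding Pd_identity using \<open>d^4 \<le> d\<^sup>2\<close> by linarith
qed

lemma pointwise:
  assumes "0 < d" "d \<le> 1/2" "0 < e" "0 \<le> f"
  shows "f / Pd lam0 d l * \<bar>cos l - cos lam0\<bar> \<le> e * (f / Pd lam0 d l) + f / e"
proof -
  let ?u = "\<bar>cos l - cos lam0\<bar>" and ?P = "Pd lam0 d l"
  have P: "0 < ?P" "?u\<^sup>2 \<le> ?P" using Pd_lower[OF assms(1,2)] by (auto simp: power2_abs)
  show ?thesis
  proof (cases "?u < e")
    case True
    hence "f / ?P * ?u \<le> f / ?P * e" using P assms by (intro mult_left_mono) auto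
    moreover have "0 \<le> f / e" using assms by simp
    moreover have "f / ?P * e = e * (f / ?P)" by simp
    ultimately show ?thesis by linarith
  next
    case False
    hence "?u * e \<le> ?u * ?u" by (intro mult_left_mono) auto
    also have "\<dots> \<le> ?P" using P by (simp add: power2_eq_square)
    finally have ue: "?u * e \<le> ?P" .
    have "f / ?P * ?u \<le> f / e"
    proof -
      have "f * ?u * e \<le> f * ?P" using ue assms by (simp add: mult_left_mono mult.assoc)
      thus ?thesis using P assms by (simp add: divide_simps mult.commute mult.left_commute)
    qed
    moreover have "0 \<le> e * (f / ?P)" using P assms by simp
    ultimately show ?thesis by linarith
  qed
qed
lemma ab_lemma: "(a::real) * x - y * a = a * (x - y)" by (simp add: algebra_simps)

lemma abs_lemma: "0 \<le> (a::real) \<Longrightarrow> \<bar>a * x\<bar> = a * \<bar>x\<bar>" by (simp add: abs_mult)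

lemma int_trig:
  fixes h :: "real \<Rightarrow> real"
  assumes "integrable lborel h" "\<And>x. \<bar>g x\<bar> \<le> 1" "continuous_on UNIV g"
  shows "integrable lborel (\<lambda>l. h l * g l)"
proof (rule Bochner_Integration.integrable_bound[OF assms(1)])
  show "(\<lambda>l. h l * g l) \<in> borel_measurable lborel"
    using assms(1,3) borel_measurable_continuous_onI by (intro borel_measurable_times) auto
  show "AE x in lborel. norm (h x * g x) \<le> norm (h x)"
    using assms(2) by (intro AE_I2) (simp add: abs_mult mult_left_le)
qed

lemma G0_lower:
  assumes "0 < m" "\<forall>l\<in>{0..pi}. m \<le> fU l" "\<forall>l\<in>{-pi..pi}. 0 \<le> fU l"
    "0 < d" "d \<le> 1/2" "d \<le> lam0" "d \<le> pi - lam0"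
    "integrable lborel (\<lambda>l. indicator {-pi..pi} l * (fU l / Pd lam0 d l))"
  shows "2*m/(13*d) \<le> integral\<^sup>L lborel (\<lambda>l. indicator {-pi..pi} l * (fU l / Pd lam0 d l))"
proof -
  let ?g = "\<lambda>l. indicator {lam0-d..lam0+d} l * (m / (13*d\<^sup>2)) :: real"
  have "integral\<^sup>L lborel ?g \<le> integral\<^sup>L lborel (\<lambda>l. indicator {-pi..pi} l * (fU l / Pd lam0 d l))"
  proof (rule integral_mono'[OF assms(8)])
    fix l :: real
    have Pp: "0 < Pd lam0 d l" using Pd_lower assms by auto
    show "0 \<le> indicator {-pi..pi} l * (fU l / Pd lam0 d l)"
      using assms(3) Pp by (auto simp: indicator_def)
    show "?g l \<le> indicator {-pi..pi} l * (fU l / Pd lam0 d l)"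
    proof (cases "l \<in> {lam0-d..lam0+d}")
      case True
      hence l0: "l \<in> {0..pi}" using assms by auto
      hence lS: "l \<in> {-pi..pi}" by auto
      have "\<bar>l - lam0\<bar> \<le> d" using True by auto
      hence Pu: "Pd lam0 d l \<le> 13*d\<^sup>2" using Pd_upper assms by auto
      have "m / (13*d\<^sup>2) \<le> fU l / (13*d\<^sup>2)" using assms l0 by (intro divide_right_mono) auto
      also have "\<dots> \<le> fU l / Pd lam0 d l" using Pp Pu assms l0
        by (intro divide_left_mono) (auto intro: order_trans[of 0 m])
      finally show ?thesis using True lS by simp
    next
      case False
      thus ?thesis using assms(3) Pp by (auto simp: indicator_def)
    qed
  qed
  moreover have "integral\<^sup>L lborel ?g = 2*m/(13*d)"
    using assms by (simp add: power2_eq_square field_simps)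
  ultimately show ?thesis by simp
qed

lemma dev_bound:
  assumes "\<forall>l\<in>{-pi..pi}. 0 \<le> fU l"
    "integrable lborel (\<lambda>l. indicator {-pi..pi} l * fU l)"
    "0 < d" "d \<le> 1/2" "0 < e" "0 \<le> K"
    "integrable lborel (\<lambda>l. indicator {-pi..pi} l * (fU l / Pd lam0 d l))"
    "\<And>l. \<bar>\<phi> l - \<psi>\<bar> \<le> K * \<bar>cos l - cos lam0\<bar>" "\<And>l. \<bar>\<phi> l\<bar> \<le> 1" "continuous_on UNIV \<phi>"
  shows "\<bar>integral\<^sup>L lborel (\<lambda>l. indicator {-pi..pi} l * (fU l / Pd lam0 d l) * \<phi> l)
          - \<psi> * integral\<^sup>L lborel (\<lambda>l. indicator {-pi..pi} l * (fU l / Pd lam0 d l))\<bar>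
     \<le> K * (e * integral\<^sup>L lborel (\<lambda>l. indicator {-pi..pi} l * (fU l / Pd lam0 d l))
            + integral\<^sup>L lborel (\<lambda>l. indicator {-pi..pi} l * fU l) / e)"
proof -
  let ?h = "\<lambda>l. indicator {-pi..pi} l * (fU l / Pd lam0 d l)"
  let ?u = "\<lambda>l. indicator {-pi..pi} l * fU l"
  have i1: "integrable lborel (\<lambda>l. ?h l * \<phi> l)" by (rule int_trig[OF assms(7,9,10)])
  have i2: "integrable lborel (\<lambda>l. \<psi> * ?h l)" by (rule integrable_mult_right[OF assms(7)])
  have ia: "integrable lborel (\<lambda>l. e * ?h l)" using assms(7) by (rule integrable_mult_right)
  have ib: "integrable lborel (\<lambda>l. ?u l / e)" using assms(2) by (intro integrable_divide_zero)
  have "\<bar>integral\<^sup>L lborel (\<lambda>l. ?h l * \<phi> l) - \<psi> * integral\<^sup>L lborel ?h\<bar>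
      = \<bar>integral\<^sup>L lborel (\<lambda>l. ?h l * \<phi> l - \<psi> * ?h l)\<bar>"
    by (simp only: Bochner_Integration.integral_diff[OF i1 i2] integral_mult_right_zero)
  also have "\<dots> \<le> integral\<^sup>L lborel (\<lambda>l. K * (e * ?h l + ?u l / e))"
  proof (rule integral_abs_bound_integral)
    show "integrable lborel (\<lambda>l. ?h l * \<phi> l - \<psi> * ?h l)" by (rule Bochner_Integration.integrable_diff[OF i1 i2])
    show "integrable lborel (\<lambda>l. K * (e * ?h l + ?u l / e))"
      by (rule integrable_mult_right, rule Bochner_Integration.integrable_add[OF ia ib])
    fix l :: real
    show "\<bar>?h l * \<phi> l - \<psi> * ?h l\<bar> \<le> K * (e * ?h l + ?u l / e)"
    proof (cases "l \<in> {-pi..pi}")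
      case True
      have Pp: "0 < Pd lam0 d l" using Pd_lower assms by auto
      have f0: "0 \<le> fU l" using assms(1) True by auto
      have "\<bar>?h l * \<phi> l - \<psi> * ?h l\<bar> = (fU l / Pd lam0 d l) * \<bar>\<phi> l - \<psi>\<bar>"
      proof -
        have ind: "indicator {-pi..pi} l = (1::real)" using True by simp
        have eq: "?h l * \<phi> l - \<psi> * ?h l = (fU l / Pd lam0 d l) * (\<phi> l - \<psi>)"
          unfolding ind by (simp only: mult_1_left ab_lemma)
        have nn: "0 \<le> fU l / Pd lam0 d l" using Pp f0 by simp
        have r: "\<bar>(fU l / Pd lam0 d l) * (\<phi> l - \<psi>)\<bar> = (fU l / Pd lam0 d l) * \<bar>\<phi> l - \<psi>\<bar>" by (rule abs_lemma[OF nn])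
        show ?thesis by (subst eq, rule r)
      qed
      also have "\<dots> \<le> (fU l / Pd lam0 d l) * (K * \<bar>cos l - cos lam0\<bar>)"
        using Pp f0 assms(8) by (intro mult_left_mono) auto
      also have "\<dots> = K * ((fU l / Pd lam0 d l) * \<bar>cos l - cos lam0\<bar>)" by simp
      also have "\<dots> \<le> K * (e * (fU l / Pd lam0 d l) + fU l / e)"
        using pointwise[OF assms(3,4,5) f0] assms(6) by (intro mult_left_mono) auto
      finally show ?thesis using True by simp
    next
      case False
      thus ?thesis using assms by simp
    qed
  qed
  also have "\<dots> = K * (e * integral\<^sup>L lborel ?h + integral\<^sup>L lborel ?u / e)"
  proof -
    have a: "integrable lborel (\<lambda>l. e * ?h l)" using assms(7) by (rule integrable_mult_right)
    have b: "integrable lborel (\<lambda>l. ?u l / e)" using assms(2) by (intro integrable_divide_zero)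
    show ?thesis by (simp only: integral_mult_right_zero Bochner_Integration.integral_add[OF a b] integral_divide_zero)
  qed
  finally show ?thesis .
qed

lemma int_prod:
  fixes u v :: "'a \<Rightarrow> real"
  assumes "u \<in> borel_measurable M" "v \<in> borel_measurable M"
    "integrable M (\<lambda>\<omega>. (u \<omega>)\<^sup>2)" "integrable M (\<lambda>\<omega>. (v \<omega>)\<^sup>2)"
  shows "integrable M (\<lambda>\<omega>. u \<omega> * v \<omega>)"
proof (rule Bochner_Integration.integrable_bound[where f="\<lambda>\<omega>. (u \<omega>)\<^sup>2 + (v \<omega>)\<^sup>2"])
  show "integrable M (\<lambda>\<omega>. (u \<omega>)\<^sup>2 + (v \<omega>)\<^sup>2)" using assms by simp
  show "(\<lambda>\<omega>. u \<omega> * v \<omega>) \<in> borel_measurable M" using assms by simp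
  show "AE \<omega> in M. norm (u \<omega> * v \<omega>) \<le> norm ((u \<omega>)\<^sup>2 + (v \<omega>)\<^sup>2)"
  proof (rule AE_I2)
    fix \<omega>
    have "0 \<le> (\<bar>u \<omega>\<bar> - \<bar>v \<omega>\<bar>)\<^sup>2" by simp
    hence "2 * (\<bar>u \<omega>\<bar> * \<bar>v \<omega>\<bar>) \<le> (u \<omega>)\<^sup>2 + (v \<omega>)\<^sup>2" by (simp add: power2_eq_square algebra_simps)
    moreover have "0 \<le> \<bar>u \<omega>\<bar> * \<bar>v \<omega>\<bar>" by simp
    ultimately have "\<bar>u \<omega>\<bar> * \<bar>v \<omega>\<bar> \<le> (u \<omega>)\<^sup>2 + (v \<omega>)\<^sup>2" by linarith
    thus "norm (u \<omega> * v \<omega>) \<le> norm ((u \<omega>)\<^sup>2 + (v \<omega>)\<^sup>2)" by (simp add: abs_mult)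
  qed
qed

lemma expand_sq:
  fixes x y z :: "'a \<Rightarrow> real"
  assumes "x \<in> borel_measurable M" "y \<in> borel_measurable M" "z \<in> borel_measurable M"
    "integrable M (\<lambda>\<omega>. (x \<omega>)\<^sup>2)" "integrable M (\<lambda>\<omega>. (y \<omega>)\<^sup>2)" "integrable M (\<lambda>\<omega>. (z \<omega>)\<^sup>2)"
  shows "integral\<^sup>L M (\<lambda>\<omega>. (x \<omega> - c1 * y \<omega> - c2 * z \<omega>)\<^sup>2) =
     integral\<^sup>L M (\<lambda>\<omega>. x \<omega> * x \<omega>) + c1\<^sup>2 * integral\<^sup>L M (\<lambda>\<omega>. y \<omega> * y \<omega>) + c2\<^sup>2 * integral\<^sup>L M (\<lambda>\<omega>. z \<omega> * z \<omega>)
     - 2*c1 * integral\<^sup>L M (\<lambda>\<omega>. x \<omega> * y \<omega>) - 2*c2 * integral\<^sup>L M (\<lambda>\<omega>. x \<omega> * z \<omega>)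
     + 2*c1*c2 * integral\<^sup>L M (\<lambda>\<omega>. y \<omega> * z \<omega>)"
proof -
  have i: "integrable M (\<lambda>\<omega>. x \<omega> * x \<omega>)" "integrable M (\<lambda>\<omega>. y \<omega> * y \<omega>)" "integrable M (\<lambda>\<omega>. z \<omega> * z \<omega>)"
    "integrable M (\<lambda>\<omega>. x \<omega> * y \<omega>)" "integrable M (\<lambda>\<omega>. x \<omega> * z \<omega>)" "integrable M (\<lambda>\<omega>. y \<omega> * z \<omega>)"
    using int_prod assms by blast+
  have "(\<lambda>\<omega>. (x \<omega> - c1 * y \<omega> - c2 * z \<omega>)\<^sup>2) = (\<lambda>\<omega>.
     x \<omega> * x \<omega> + c1\<^sup>2 * (y \<omega> * y \<omega>) + c2\<^sup>2 * (z \<omega> * z \<omega>)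
     - 2*c1 * (x \<omega> * y \<omega>) - 2*c2 * (x \<omega> * z \<omega>) + 2*c1*c2 * (y \<omega> * z \<omega>))"
    by (rule ext) (simp add: power2_eq_square algebra_simps)
  then show ?thesis using i by simp
qed

lemma cov_real:
  fixes f :: "real \<Rightarrow> real" and k :: int
  assumes "set_integrable lborel {-pi..pi} f"
    and "complex_of_real E = (LINT l:{-pi..pi}|lborel. exp (\<i> * of_int k * of_real l) * of_real (f l))"
  shows "E = integral\<^sup>L lborel (\<lambda>l. indicator {-pi..pi} l * f l * cos (of_int k * l))"
proof -
  let ?h = "\<lambda>l. indicator {-pi..pi} l * f l"
  have h: "integrable lborel ?h" using assms(1) unfolding set_integrable_def by simp
  have ic: "integrable lborel (\<lambda>l. ?h l * cos (of_int k * l))"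
    by (rule int_trig[OF h]) (auto intro!: continuous_intros)
  have isn: "integrable lborel (\<lambda>l. ?h l * sin (of_int k * l))"
    by (rule int_trig[OF h]) (auto intro!: continuous_intros)
  have eq: "(\<lambda>l. indicator {-pi..pi} l *\<^sub>R (exp (\<i> * of_int k * of_real l) * of_real (f l)))
     = (\<lambda>l. complex_of_real (?h l * cos (of_int k * l)) + \<i> * complex_of_real (?h l * sin (of_int k * l)))"
  proof
    fix l
    have "exp (\<i> * of_int k * of_real l) = exp (\<i> * complex_of_real (of_int k * l))" by (simp add: mult.assoc)
    also have "\<dots> = complex_of_real (cos (of_int k * l)) + \<i> * complex_of_real (sin (of_int k * l))"
      by (rule complex_eqI) (simp_all add: Re_exp Im_exp)
    finally show "indicator {-pi..pi} l *\<^sub>R (exp (\<i> * of_int k * of_real l) * of_real (f l))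
     = complex_of_real (?h l * cos (of_int k * l)) + \<i> * complex_of_real (?h l * sin (of_int k * l))"
      by (simp add: scaleR_conv_of_real algebra_simps)
  qed
  have "complex_of_real E = integral\<^sup>L lborel (\<lambda>l. complex_of_real (?h l * cos (of_int k * l)) + \<i> * complex_of_real (?h l * sin (of_int k * l)))"
    using assms(2) unfolding set_lebesgue_integral_def eq .
  also have "\<dots> = complex_of_real (integral\<^sup>L lborel (\<lambda>l. ?h l * cos (of_int k * l))) + \<i> * complex_of_real (integral\<^sup>L lborel (\<lambda>l. ?h l * sin (of_int k * l)))"
  proof -
    have c1: "complex_integrable lborel (\<lambda>l. complex_of_real (?h l * cos (of_int k * l)))"
      using ic by (simp only: complex_of_real_integrable_eq)
    have c2: "complex_integrable lborel (\<lambda>l. complex_of_real (?h l * sin (of_int k * l)))"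
      using isn by (simp only: complex_of_real_integrable_eq)
    have c3: "complex_integrable lborel (\<lambda>l. \<i> * complex_of_real (?h l * sin (of_int k * l)))"
      using c2 by (rule integrable_mult_right)
    show ?thesis
      apply (subst Bochner_Integration.integral_add[OF c1 c3])
      apply (subst integral_mult_right_zero)
      apply (simp only: integral_complex_of_real)
      done
  qed
  finally have "Re (complex_of_real E) = integral\<^sup>L lborel (\<lambda>l. ?h l * cos (of_int k * l))" by simp
  thus ?thesis by simp
qed

lemma normal_eq_aux:
  fixes g0 L :: real
  assumes "g0 \<ge> 0" "\<And>h. 0 \<le> 2*h*L + h\<^sup>2*g0"
  shows "L = 0"
proof -
  define h where "h = -L/(g0+1)"
  have hk: "h*(g0+1) = -L" unfolding h_def using assms(1) by (simp add: field_simps)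
  have "(g0+1)\<^sup>2*(2*h*L+h\<^sup>2*g0) = -(L\<^sup>2)*(g0+2)" using hk by algebra
  moreover have "0 \<le> (g0+1)\<^sup>2*(2*h*L+h\<^sup>2*g0)" using assms(2)[of h] by simp
  ultimately have "L\<^sup>2*(g0+2) \<le> 0" by simp
  moreover have "L\<^sup>2*(g0+2) \<ge> 0" using assms(1) by simp
  ultimately have "L\<^sup>2*(g0+2) = 0" by simp
  thus ?thesis using assms(1) by simp
qed

lemma normal_eqs:
  fixes g0 g1 g2 a1 a2 :: real
  assumes "g0 \<ge> 0"
  and "\<And>c1 c2. g0*(1+a1\<^sup>2+a2\<^sup>2) - 2*a1*g1 - 2*a2*g2 + 2*a1*a2*g1 \<le> g0*(1+c1\<^sup>2+c2\<^sup>2) - 2*c1*g1 - 2*c2*g2 + 2*c1*c2*g1"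
  shows "g0*a1 + g1*a2 = g1 \<and> g1*a1 + g0*a2 = g2"
proof -
  have "\<And>h. 0 \<le> 2*h*(g0*a1 + g1*a2 - g1) + h\<^sup>2*g0"
  proof -
    fix h
    have "g0*(1+a1\<^sup>2+a2\<^sup>2) - 2*a1*g1 - 2*a2*g2 + 2*a1*a2*g1 \<le> g0*(1+(a1+h)\<^sup>2+a2\<^sup>2) - 2*(a1+h)*g1 - 2*a2*g2 + 2*(a1+h)*a2*g1"
      by (rule assms(2))
    then show "0 \<le> 2*h*(g0*a1 + g1*a2 - g1) + h\<^sup>2*g0" by (simp add: algebra_simps power2_eq_square)
  qed
  from normal_eq_aux[OF assms(1) this] have 1: "g0*a1 + g1*a2 = g1" by simp
  have "\<And>h. 0 \<le> 2*h*(g1*a1 + g0*a2 - g2) + h\<^sup>2*g0"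
  proof -
    fix h
    have "g0*(1+a1\<^sup>2+a2\<^sup>2) - 2*a1*g1 - 2*a2*g2 + 2*a1*a2*g1 \<le> g0*(1+a1\<^sup>2+(a2+h)\<^sup>2) - 2*a1*g1 - 2*(a2+h)*g2 + 2*a1*(a2+h)*g1"
      by (rule assms(2))
    then show "0 \<le> 2*h*(g1*a1 + g0*a2 - g2) + h\<^sup>2*g0" by (simp add: algebra_simps power2_eq_square)
  qed
  from normal_eq_aux[OF assms(1) this] have 2: "g1*a1 + g0*a2 = g2" by simp
  show ?thesis using 1 2 by simp
qed

lemma ratio_bound:
  fixes A H a K e C m :: real
  assumes "0 < H" "0 < e" "0 \<le> C" "0 < m" "2*m/(13*e\<^sup>2) \<le> H" "0 \<le> K"
    "\<bar>A - a*H\<bar> \<le> K*(e*H + C/e)"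
  shows "\<bar>A/H - a\<bar> \<le> K * e * (1 + 13*C/(2*m))"
proof -
  have "A/H - a = (A - a*H)/H" using assms(1) by (simp add: field_simps)
  hence "\<bar>A/H - a\<bar> = \<bar>A - a*H\<bar>/H" using assms(1) by simp
  also have "\<dots> \<le> K*(e*H + C/e)/H" using assms(1,7) by (simp add: divide_right_mono)
  also have "\<dots> = K*(e + C/(e*H))" using assms(1,2) by (simp add: field_simps)
  also have "\<dots> \<le> K*(e + 13*C*e/(2*m))"
  proof -
    have "2*m \<le> 13*e\<^sup>2*H" using assms(5,2) by (simp add: divide_le_eq mult.commute)
    hence "C*(2*m) \<le> C*(13*e\<^sup>2*H)" using assms(3) by (rule mult_left_mono)
    moreover have "C*(13*e\<^sup>2*H) = C * (e * (H * e * 13))" by (simp add: power2_eq_square)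
    ultimately have "C * (m * 2) \<le> C * (e * (H * e * 13))" by simp
    hence "C/(e*H) \<le> 13*C*e/(2*m)" using assms(1,2,4)
      by (simp add: divide_simps power2_eq_square mult.commute mult.left_commute)
    thus ?thesis using assms(6) by (intro mult_left_mono) auto
  qed
  also have "\<dots> = K * e * (1 + 13*C/(2*m))" using assms(4) by (simp add: field_simps)
  finally show ?thesis .
qed

lemma cos2_bound: "\<bar>cos (2*l) - cos (2*lam0)\<bar> \<le> 4 * \<bar>cos l - cos (lam0::real)\<bar>"
proof -
  have "cos (2*l) - cos (2*lam0) = 2 * (cos l - cos lam0) * (cos l + cos lam0)"
    by (simp only: cos_double_cos) (simp add: power2_eq_square algebra_simps)
  hence "\<bar>cos (2*l) - cos (2*lam0)\<bar> = 2 * \<bar>cos l - cos lam0\<bar> * \<bar>cos l + cos lam0\<bar>"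
    by (simp only: abs_mult abs_numeral)
  also have "\<dots> \<le> 2 * \<bar>cos l - cos lam0\<bar> * 2"
  proof -
    have "\<bar>cos l + cos lam0\<bar> \<le> 2" using abs_cos_le_one[of l] abs_cos_le_one[of lam0] by linarith
    thus ?thesis by (intro mult_left_mono) auto
  qed
  finally show ?thesis by simp
qed

lemma solve2:
  fixes H g1 g2 x y :: real
  assumes "0 < H" "H*x + g1*y = g1" "g1*x + H*y = g2" "1 - (g1/H)\<^sup>2 \<noteq> 0"
  shows "x = (g1/H - g1/H * (g2/H)) / (1 - (g1/H)\<^sup>2)" "y = (g2/H - (g1/H)\<^sup>2) / (1 - (g1/H)\<^sup>2)"
proof -
  define p where "p = g1/H"
  define q where "q = g2/H"
  have g1: "g1 = p*H" and g2: "g2 = q*H" using assms(1) unfolding p_def q_def by auto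
  have e1: "x + p*y = p" using assms(1,2) unfolding g1 by (simp add: algebra_simps) (metis distrib_left mult.commute mult_cancel_left less_irrefl)
  have e2: "p*x + y = q" using assms(1,3) unfolding g1 g2 by (simp add: algebra_simps) (metis distrib_left mult.commute mult_cancel_left less_irrefl)
  have "x * (1 - p\<^sup>2) - (p - p*q) = (x + p*y - p) - p*(p*x + y - q)" by (simp add: power2_eq_square algebra_simps)
  hence "x * (1 - p\<^sup>2) = p - p*q" using e1 e2 by simp
  thus "x = (g1/H - g1/H * (g2/H)) / (1 - (g1/H)\<^sup>2)" using assms(4) unfolding p_def[symmetric] q_def[symmetric]
    by (simp add: eq_divide_eq)
  have "y * (1 - p\<^sup>2) - (q - p\<^sup>2) = (p*x + y - q) - p*(x + p*y - p)" by (simp add: power2_eq_square algebra_simps)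
  hence "y * (1 - p\<^sup>2) = q - p\<^sup>2" using e1 e2 by simp
  thus "y = (g2/H - (g1/H)\<^sup>2) / (1 - (g1/H)\<^sup>2)" using assms(4) unfolding p_def[symmetric] q_def[symmetric]
    by (simp add: eq_divide_eq)
qed

theorem lemma2:
  fixes lam0 :: real
    and fU :: "real \<Rightarrow> real"
    and MU :: "'u measure" and U :: "int \<Rightarrow> 'u \<Rightarrow> real"
    and M :: "real \<Rightarrow> 'a measure" and X :: "real \<Rightarrow> int \<Rightarrow> 'a \<Rightarrow> real"
    and a :: "real \<Rightarrow> real \<times> real"
  assumes lam0_pos: "0 < lam0" "lam0 < pi"
    and U: "has_spectral_density MU U fU"
    and fU_cont: "continuous_on {0..pi} fU"
    and fU_pos: "(INF l\<in>{0..pi}. fU l) > 0"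
    and X: "\<And>\<delta>. \<delta> \<in> {0<..<1} \<Longrightarrow> has_spectral_density (M \<delta>) (X \<delta>)
              (\<lambda>l. fU l / ((cmod (1 - complex_of_real (1 - \<delta>) * exp (- \<i> * complex_of_real (l - lam0))))\<^sup>2
                          * (cmod (1 - complex_of_real (1 - \<delta>) * exp (- \<i> * complex_of_real (l + lam0))))\<^sup>2))"
    and a_min: "\<And>\<delta> t c1 c2. \<delta> \<in> {0<..<1} \<Longrightarrow>
              integral\<^sup>L (M \<delta>) (\<lambda>\<omega>. (X \<delta> t \<omega> - fst (a \<delta>) * X \<delta> (t - 1) \<omega> - snd (a \<delta>) * X \<delta> (t - 2) \<omega>)\<^sup>2)
              \<le> integral\<^sup>L (M \<delta>) (\<lambda>\<omega>. (X \<delta> t \<omega> - c1 * X \<delta> (t - 1) \<omega> - c2 * X \<delta> (t - 2) \<omega>)\<^sup>2)"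
  shows "(a \<longlongrightarrow> (2 * cos lam0, -1)) (at_right 0) \<and>
         ((\<lambda>\<delta>. arccos (fst (a \<delta>) * (1 - snd (a \<delta>)) / (-4 * snd (a \<delta>)))) \<longlongrightarrow> lam0) (at_right 0)"
proof -
  have fU_nn: "\<forall>l\<in>{-pi..pi}. 0 \<le> fU l" using U unfolding has_spectral_density_def by blast
  have fU_int: "integrable lborel (\<lambda>l. indicator {-pi..pi} l * fU l)"
    using U unfolding has_spectral_density_def set_integrable_def by simp
  define m where "m = (INF l\<in>{0..pi}. fU l)"
  have m_pos: "0 < m" using fU_pos m_def by simp
  have bdd: "bdd_below (fU ` {0..pi})"
    using compact_continuous_image[OF fU_cont compact_Icc]
    by (intro bounded_imp_bdd_below compact_imp_bounded)
  have fU_m: "\<forall>l\<in>{0..pi}. m \<le> fU l" unfolding m_def using bdd by (auto intro: cINF_lower)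
  define C where "C = integral\<^sup>L lborel (\<lambda>l. indicator {-pi..pi} l * fU l)"
  have C_nn: "0 \<le> C" unfolding C_def using fU_nn by (intro Bochner_Integration.integral_nonneg) (auto simp: indicator_def)
  define H where "H d = integral\<^sup>L lborel (\<lambda>l. indicator {-pi..pi} l * (fU l / Pd lam0 d l))" for d
  define G1 where "G1 d = integral\<^sup>L lborel (\<lambda>l. indicator {-pi..pi} l * (fU l / Pd lam0 d l) * cos l)" for d
  define G2 where "G2 d = integral\<^sup>L lborel (\<lambda>l. indicator {-pi..pi} l * (fU l / Pd lam0 d l) * cos (2 * l))" for d
  have Xd: "has_spectral_density (M d) (X d) (\<lambda>l. fU l / Pd lam0 d l)" if d: "d \<in> {0<..<1}" for d
  proof -
    have "(\<lambda>l. fU l / ((cmod (1 - complex_of_real (1 - d) * exp (- \<i> * complex_of_real (l - lam0))))\<^sup>2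
                          * (cmod (1 - complex_of_real (1 - d) * exp (- \<i> * complex_of_real (l + lam0))))\<^sup>2))
          = (\<lambda>l. fU l / Pd lam0 d l)"
      by (rule ext) (simp only: cmod_sq_formula Pd_def)
    thus ?thesis using X[OF d] by simp
  qed
  have Fint: "integrable lborel (\<lambda>l. indicator {-pi..pi} l * (fU l / Pd lam0 d l))" if d: "d \<in> {0<..<1}" for d
    using Xd[OF d] unfolding has_spectral_density_def set_integrable_def by simp
  have normal: "H d * fst (a d) + G1 d * snd (a d) = G1 d \<and> G1 d * fst (a d) + H d * snd (a d) = G2 d"
    if d: "d \<in> {0<..<1}" for d
  proof -
    note hs = Xd[OF d, unfolded has_spectral_density_def]
    have Fs: "set_integrable lborel {-pi..pi} (\<lambda>l. fU l / Pd lam0 d l)" using hs by blast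
    have Xm: "X d t \<in> borel_measurable (M d)" "integrable (M d) (\<lambda>\<omega>. (X d t \<omega>)\<^sup>2)" for t
      using hs by blast+
    have cov: "integral\<^sup>L (M d) (\<lambda>\<omega>. X d t \<omega> * X d s \<omega>)
        = integral\<^sup>L lborel (\<lambda>l. indicator {-pi..pi} l * (fU l / Pd lam0 d l) * cos (of_int (t - s) * l))" for t s
      by (rule cov_real[OF Fs]) (use hs in blast)
    have c00: "integral\<^sup>L (M d) (\<lambda>\<omega>. X d t \<omega> * X d t \<omega>) = H d" for t
      using cov[of t t] unfolding H_def by simp
    have c01: "integral\<^sup>L (M d) (\<lambda>\<omega>. X d 0 \<omega> * X d (0 - 1) \<omega>) = G1 d"
      using cov[of 0 "0 - 1"] unfolding G1_def by simp
    have c12: "integral\<^sup>L (M d) (\<lambda>\<omega>. X d (0 - 1) \<omega> * X d (0 - 2) \<omega>) = G1 d"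
      using cov[of "0 - 1" "0 - 2"] unfolding G1_def by simp
    have c02: "integral\<^sup>L (M d) (\<lambda>\<omega>. X d 0 \<omega> * X d (0 - 2) \<omega>) = G2 d"
      using cov[of 0 "0 - 2"] unfolding G2_def by simp
    have Q: "integral\<^sup>L (M d) (\<lambda>\<omega>. (X d 0 \<omega> - c1 * X d (0 - 1) \<omega> - c2 * X d (0 - 2) \<omega>)\<^sup>2)
        = H d * (1 + c1\<^sup>2 + c2\<^sup>2) - 2*c1*G1 d - 2*c2*G2 d + 2*c1*c2*G1 d" for c1 c2
      by (simp only: expand_sq[OF Xm(1) Xm(1) Xm(1) Xm(2) Xm(2) Xm(2)] c00 c01 c12 c02)
        (simp add: algebra_simps)
    have H0: "0 \<le> H d"
    proof -
      have "0 \<le> integral\<^sup>L (M d) (\<lambda>\<omega>. X d 0 \<omega> * X d 0 \<omega>)" by (intro Bochner_Integration.integral_nonneg) simp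
      thus ?thesis using c00 by simp
    qed
    show ?thesis
    proof (rule normal_eqs[OF H0])
      fix c1 c2
      show "H d * (1 + (fst (a d))\<^sup>2 + (snd (a d))\<^sup>2) - 2 * fst (a d) * G1 d - 2 * snd (a d) * G2 d + 2 * fst (a d) * snd (a d) * G1 d
          \<le> H d * (1 + c1\<^sup>2 + c2\<^sup>2) - 2 * c1 * G1 d - 2 * c2 * G2 d + 2 * c1 * c2 * G1 d"
        using a_min[OF d, of 0 c1 c2] unfolding Q .
    qed
  qed
  define d0 where "d0 = min (1/2) (min lam0 (pi - lam0))"
  have d0: "0 < d0" unfolding d0_def using lam0_pos by simp
  have ev: "eventually (\<lambda>d. 0 < d \<and> d < d0) (at_right (0::real))"
    unfolding eventually_at_right_field using d0 by blast
  define K1 where "K1 = 1 + 13*C/(2*m)"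
  have per: "0 < H d \<and> \<bar>G1 d / H d - cos lam0\<bar> \<le> 1 * sqrt d * K1
       \<and> \<bar>G2 d / H d - cos (2*lam0)\<bar> \<le> 4 * sqrt d * K1" if d: "0 < d" "d < d0" for d
  proof -
    have d': "d \<le> 1/2" "d \<le> lam0" "d \<le> pi - lam0" "d \<in> {0<..<1}" using d unfolding d0_def by auto
    have Fi: "integrable lborel (\<lambda>l. indicator {-pi..pi} l * (fU l / Pd lam0 d l))" by (rule Fint[OF d'(4)])
    have Hlow: "2*m/(13*d) \<le> H d" unfolding H_def
      by (rule G0_lower[OF m_pos fU_m fU_nn d(1) d'(1,2,3) Fi])
    have Hpos: "0 < H d" using Hlow m_pos d(1) by (smt (verit) divide_pos_pos)
    have e: "0 < sqrt d" "(sqrt d)\<^sup>2 = d" using d(1) by auto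
    have Hlow': "2*m/(13*(sqrt d)\<^sup>2) \<le> H d" using Hlow e by simp
    have dv1: "\<bar>G1 d - cos lam0 * H d\<bar> \<le> 1 * (sqrt d * H d + C / sqrt d)"
      unfolding G1_def H_def C_def
      by (rule dev_bound[where \<phi>=cos and \<psi>="cos lam0" and K=1, OF fU_nn fU_int d(1) d'(1) e(1) _ Fi])
         (auto intro: continuous_intros)
    have dv2: "\<bar>G2 d - cos (2*lam0) * H d\<bar> \<le> 4 * (sqrt d * H d + C / sqrt d)"
      unfolding G2_def H_def C_def
      by (rule dev_bound[where \<phi>="\<lambda>l. cos (2*l)" and \<psi>="cos (2*lam0)" and K=4, OF fU_nn fU_int d(1) d'(1) e(1) _ Fi])
         (auto intro!: continuous_intros cos2_bound)
    have r1: "\<bar>G1 d / H d - cos lam0\<bar> \<le> 1 * sqrt d * K1" unfolding K1_def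
      by (rule ratio_bound[OF Hpos e(1) C_nn m_pos Hlow' _ dv1]) simp
    have r2: "\<bar>G2 d / H d - cos (2*lam0)\<bar> \<le> 4 * sqrt d * K1" unfolding K1_def
      by (rule ratio_bound[OF Hpos e(1) C_nn m_pos Hlow' _ dv2]) simp
    show ?thesis using Hpos r1 r2 by blast
  qed
  have lim_sq: "((\<lambda>d. c * sqrt d * K1) \<longlongrightarrow> 0) (at_right 0)" for c
  proof -
    have "((\<lambda>d. c * sqrt d * K1) \<longlongrightarrow> c * sqrt 0 * K1) (at_right 0)" by (intro tendsto_intros)
    thus ?thesis by simp
  qed
  have rho1: "((\<lambda>d. G1 d / H d) \<longlongrightarrow> cos lam0) (at_right 0)"
  proof -
    have "((\<lambda>d. G1 d / H d - cos lam0) \<longlongrightarrow> 0) (at_right 0)"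
    proof (rule Lim_null_comparison[OF _ lim_sq[of 1]])
      show "\<forall>\<^sub>F d in at_right 0. norm (G1 d / H d - cos lam0) \<le> 1 * sqrt d * K1"
        using ev by eventually_elim (use per in auto)
    qed
    thus ?thesis by (simp add: LIM_zero_iff)
  qed
  have rho2: "((\<lambda>d. G2 d / H d) \<longlongrightarrow> cos (2*lam0)) (at_right 0)"
  proof -
    have "((\<lambda>d. G2 d / H d - cos (2*lam0)) \<longlongrightarrow> 0) (at_right 0)"
    proof (rule Lim_null_comparison[OF _ lim_sq[of 4]])
      show "\<forall>\<^sub>F d in at_right 0. norm (G2 d / H d - cos (2*lam0)) \<le> 4 * sqrt d * K1"
        using ev by eventually_elim (use per in auto)
    qed
    thus ?thesis by (simp add: LIM_zero_iff)
  qed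
  have c0: "(cos lam0)\<^sup>2 < 1"
  proof -
    have "0 < sin lam0" using lam0_pos by (intro sin_gt_zero) auto
    hence "0 < (sin lam0)\<^sup>2" by simp
    thus ?thesis using sin_cos_squared_add[of lam0] by linarith
  qed
  have c0': "1 - (cos lam0)\<^sup>2 \<noteq> 0" using c0 by simp
  have "eventually (\<lambda>d. (G1 d / H d)\<^sup>2 < 1) (at_right 0)"
    using order_tendstoD(2)[OF tendsto_power[OF rho1, of 2] c0] .
  with ev have ev2: "eventually (\<lambda>d. 0 < d \<and> d < d0 \<and> (G1 d / H d)\<^sup>2 < 1) (at_right 0)"
    by eventually_elim auto
  have fst_eq: "eventually (\<lambda>d. (G1 d / H d - G1 d / H d * (G2 d / H d)) / (1 - (G1 d / H d)\<^sup>2) = fst (a d)) (at_right 0)"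
    using ev2
  proof eventually_elim
    case (elim d)
    hence dd: "d \<in> {0<..<1}" unfolding d0_def by auto
    have "0 < H d" using per elim by blast
    thus ?case using solve2(1)[OF _ _ _, of "H d" "fst (a d)" "G1 d" "snd (a d)" "G2 d"] normal[OF dd] elim by auto
  qed
  have snd_eq: "eventually (\<lambda>d. (G2 d / H d - (G1 d / H d)\<^sup>2) / (1 - (G1 d / H d)\<^sup>2) = snd (a d)) (at_right 0)"
    using ev2
  proof eventually_elim
    case (elim d)
    hence dd: "d \<in> {0<..<1}" unfolding d0_def by auto
    have "0 < H d" using per elim by blast
    thus ?case using solve2(2)[OF _ _ _, of "H d" "fst (a d)" "G1 d" "snd (a d)" "G2 d"] normal[OF dd] elim by auto
  qed
  have cd: "cos (2*lam0) = 2 * (cos lam0)\<^sup>2 - 1" by (rule cos_double_cos)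
  have v1: "(cos lam0 - cos lam0 * cos (2*lam0)) / (1 - (cos lam0)\<^sup>2) = 2 * cos lam0"
    using c0' unfolding cd by (simp add: field_simps power2_eq_square)
  have v2: "(cos (2*lam0) - (cos lam0)\<^sup>2) / (1 - (cos lam0)\<^sup>2) = -1"
    using c0' unfolding cd by (simp add: field_simps power2_eq_square)
  have l1: "((\<lambda>d. fst (a d)) \<longlongrightarrow> 2 * cos lam0) (at_right 0)"
  proof -
    have "((\<lambda>d. (G1 d / H d - G1 d / H d * (G2 d / H d)) / (1 - (G1 d / H d)\<^sup>2))
        \<longlongrightarrow> (cos lam0 - cos lam0 * cos (2*lam0)) / (1 - (cos lam0)\<^sup>2)) (at_right 0)"
      by (intro tendsto_intros rho1 rho2 c0')
    thus ?thesis unfolding v1 using fst_eq by (rule Lim_transform_eventually)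
  qed
  have l2: "((\<lambda>d. snd (a d)) \<longlongrightarrow> -1) (at_right 0)"
  proof -
    have "((\<lambda>d. (G2 d / H d - (G1 d / H d)\<^sup>2) / (1 - (G1 d / H d)\<^sup>2))
        \<longlongrightarrow> (cos (2*lam0) - (cos lam0)\<^sup>2) / (1 - (cos lam0)\<^sup>2)) (at_right 0)"
      by (intro tendsto_intros rho1 rho2 c0')
    thus ?thesis unfolding v2 using snd_eq by (rule Lim_transform_eventually)
  qed
  have part1: "(a \<longlongrightarrow> (2 * cos lam0, -1)) (at_right 0)"
    using tendsto_Pair[OF l1 l2] by simp
  have arg: "((\<lambda>d. fst (a d) * (1 - snd (a d)) / (-4 * snd (a d))) \<longlongrightarrow> cos lam0) (at_right 0)"
  proof -
    have "((\<lambda>d. fst (a d) * (1 - snd (a d)) / (-4 * snd (a d))) \<longlongrightarrow> 2 * cos lam0 * (1 - -1) / (-4 * -1)) (at_right 0)"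
      by (intro tendsto_intros l1 l2) simp
    thus ?thesis by simp
  qed
  have cb: "-1 < cos lam0" "cos lam0 < 1" using c0 unfolding power2_less_1_iff by auto
  have "((\<lambda>d. arccos (fst (a d) * (1 - snd (a d)) / (-4 * snd (a d)))) \<longlongrightarrow> arccos (cos lam0)) (at_right 0)"
    by (rule isCont_tendsto_compose[OF isCont_arccos[OF cb] arg])
  moreover have "arccos (cos lam0) = lam0" using lam0_pos by (intro arccos_cos) auto
  ultimately show ?thesis using part1 by simp
qed

end
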